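(* Let $n\ge 2$, let $A\in\mathbb{R}^{n\times n}$ be symmetric, let $B^a\in\mathbb{R}^{n\times n}$ be skew-symmetric and $B^s\in\mathbb{R}^{n\times n}$ symmetric, and let $K\ge 1$ be an integer such that $(B^s,A,B^a)$ satisfies the inhomogeneous Kalman rank condition of order $K$. Then there exist nonnegative integers $\alpha,\beta$ and a constant $c>0$ such that for every $\widehat U\in\mathbb{C}^n$: (i) for every real $\xi$ with $|\xi|\ge 1$, $$\sum_{k=0}^{K}|\xi|^{-2k}\,\big|B^s(i\xi A+B^a)^k\widehat U\big|^2\;\ge\; c\,|\xi|^{-2\alpha}|\widehat U|^2;$$ (ii) for every real $\xi$ with $0<|\xi|\le 1$, $$\sum_{k=0}^{K}\big|B^s(i\xi A+B^a)^k\widehat U\big|^2\;\ge\; c\,|\xi|^{2\beta}|\widehat U|^2.$$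
   Context: $|\cdot|$ denotes the Hermitian norm on $\mathbb{C}^n$. Inhomogeneous Kalman rank condition of order $K$: for every real $\xi\neq 0$, the $(K+1)n\times n$ complex matrix obtained by stacking the blocks $B^s,\;B^s(i\xi A+B^a),\;B^s(i\xi A+B^a)^2,\;\dots,\;B^s(i\xi A+B^a)^K$ on top of each other has rank $n$. *)

theory Defs
  imports "HOL-Analysis.Analysis"
begin

definition cmat :: "real^'n^'n \<Rightarrow> complex^'n^'n" where
  "cmat M = (\<chi> i j. complex_of_real (M $ i $ j))"

primrec matpow :: "'a::comm_ring_1^'n^'n \<Rightarrow> nat \<Rightarrow> 'a^'n^'n" where
  "matpow M 0 = mat 1"
| "matpow M (Suc k) = M ** matpow M k"

definition symb :: "real^'n^'n \<Rightarrow> real^'n^'n \<Rightarrow> real \<Rightarrow> complex^'n^'n" where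
  "symb A Ba \<xi> = (\<chi> i j. \<i> * complex_of_real \<xi> * complex_of_real (A $ i $ j)) + cmat Ba"

text \<open>Rank of the stacked (K+1)n x n complex matrix with blocks Bs (i xi A + Ba)^k, k = 0..K,
  computed as the (row) rank: dimension of the complex span of all its rows
  (this is literally the library's row-rank definition of rank, applied to the stacked matrix).\<close>
definition stacked_rank :: "real^'n^'n \<Rightarrow> real^'n^'n \<Rightarrow> real^'n^'n \<Rightarrow> nat \<Rightarrow> real \<Rightarrow> nat" where
  "stacked_rank Bs A Ba K \<xi> =
     vec.dim {row j (cmat Bs ** matpow (symb A Ba \<xi>) k) | j k. k \<le> K}"

definition kalman_rank_condition :: "real^'n^'n \<Rightarrow> real^'n^'n \<Rightarrow> real^'n^'n \<Rightarrow> nat \<Rightarrow> bool" where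
  "kalman_rank_condition Bs A Ba K \<longleftrightarrow>
     (\<forall>\<xi>::real. \<xi> \<noteq> 0 \<longrightarrow> stacked_rank Bs A Ba K \<xi> = CARD('n))"

end

theory Submission
  imports Defs "HOL-Computational_Algebra.Polynomial"
begin


definition pf :: "(real \<Rightarrow> complex) \<Rightarrow> bool" where
  "pf f \<longleftrightarrow> (\<exists>p. \<forall>x. f x = poly p (of_real x))"
definition rpf :: "(real \<Rightarrow> real) \<Rightarrow> bool" where
  "rpf f \<longleftrightarrow> (\<exists>p. \<forall>x. f x = poly p x)"

lemma pf_const: "pf (\<lambda>x. c)"
  unfolding pf_def by (rule exI[of _ "[:c:]"]) simp
lemma pf_ofreal: "pf (\<lambda>x. of_real x)"
  unfolding pf_def by (rule exI[of _ "[:0,1:]"]) simp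
lemma pf_add: "pf f \<Longrightarrow> pf g \<Longrightarrow> pf (\<lambda>x. f x + g x)"
  unfolding pf_def by (metis poly_add)
lemma pf_mult: "pf f \<Longrightarrow> pf g \<Longrightarrow> pf (\<lambda>x. f x * g x)"
  unfolding pf_def by (metis poly_mult)
lemma pf_sum: "(\<And>i. i \<in> S \<Longrightarrow> pf (f i)) \<Longrightarrow> pf (\<lambda>x. \<Sum>i\<in>S. f i x)"
proof (induction S rule: infinite_finite_induct)
  case (infinite A) then show ?case by (simp add: pf_const)
next
  case empty then show ?case by (simp add: pf_const)
next
  case (insert a A) then show ?case by (simp add: pf_add)
qed
lemma pf_prod: "(\<And>i. i \<in> S \<Longrightarrow> pf (f i)) \<Longrightarrow> pf (\<lambda>x. \<Prod>i\<in>S. f i x)"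
proof (induction S rule: infinite_finite_induct)
  case (infinite A) then show ?case by (simp add: pf_const)
next
  case empty then show ?case by (simp add: pf_const)
next
  case (insert a A) then show ?case by (simp add: pf_mult)
qed

lemma rpf_const: "rpf (\<lambda>x. c)"
  unfolding rpf_def by (rule exI[of _ "[:c:]"]) simp
lemma rpf_add: "rpf f \<Longrightarrow> rpf g \<Longrightarrow> rpf (\<lambda>x. f x + g x)"
  unfolding rpf_def by (metis poly_add)
lemma rpf_mult: "rpf f \<Longrightarrow> rpf g \<Longrightarrow> rpf (\<lambda>x. f x * g x)"
  unfolding rpf_def by (metis poly_mult)
lemma rpf_sum: "(\<And>i. i \<in> S \<Longrightarrow> rpf (f i)) \<Longrightarrow> rpf (\<lambda>x. \<Sum>i\<in>S. f i x)"
proof (induction S rule: infinite_finite_induct)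
  case (infinite A) then show ?case by (simp add: rpf_const)
next
  case empty then show ?case by (simp add: rpf_const)
next
  case (insert a A) then show ?case by (simp add: rpf_add)
qed

lemma Re_poly_of_real: "Re (poly p (of_real x)) = poly (map_poly Re p) x"
  by (induction p rule: pCons_induct) (auto simp: map_poly_pCons)
lemma Im_poly_of_real: "Im (poly p (of_real x)) = poly (map_poly Im p) x"
  by (induction p rule: pCons_induct) (auto simp: map_poly_pCons)

lemma pf_cmod2: "pf f \<Longrightarrow> rpf (\<lambda>x. (cmod (f x))^2)"
proof -
  assume "pf f"
  then obtain p where p: "\<And>x. f x = poly p (of_real x)" unfolding pf_def by blast
  show ?thesis unfolding rpf_def
    by (rule exI[of _ "map_poly Re p * map_poly Re p + map_poly Im p * map_poly Im p"])
       (simp add: p cmod_power2 Re_poly_of_real[symmetric] Im_poly_of_real[symmetric] flip: power2_eq_square)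
qed

lemma rpf_upper: "rpf f \<Longrightarrow> \<exists>C d. C \<ge> 1 \<and> (\<forall>x. \<bar>f x\<bar> \<le> C * max 1 \<bar>x\<bar> ^ d)"
proof -
  assume "rpf f"
  then obtain p where p: "\<And>x. f x = poly p x" unfolding rpf_def by blast
  define C where "C = 1 + (\<Sum>i\<le>degree p. \<bar>coeff p i\<bar>)"
  have "\<bar>f x\<bar> \<le> C * max 1 \<bar>x\<bar> ^ degree p" for x
  proof -
    have "\<bar>f x\<bar> = \<bar>\<Sum>i\<le>degree p. coeff p i * x ^ i\<bar>" by (simp add: p poly_altdef)
    also have "\<dots> \<le> (\<Sum>i\<le>degree p. \<bar>coeff p i * x ^ i\<bar>)" by (rule sum_abs)
    also have "\<dots> \<le> (\<Sum>i\<le>degree p. \<bar>coeff p i\<bar> * max 1 \<bar>x\<bar> ^ degree p)"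
    proof (rule sum_mono)
      fix i assume "i \<in> {..degree p}"
      then have "\<bar>x\<bar> ^ i \<le> max 1 \<bar>x\<bar> ^ degree p"
        by (meson atMost_iff le_max_iff_disj linorder_linear max.cobounded2 order_trans power_increasing power_mono abs_ge_zero)
      then show "\<bar>coeff p i * x ^ i\<bar> \<le> \<bar>coeff p i\<bar> * max 1 \<bar>x\<bar> ^ degree p"
        by (simp add: abs_mult power_abs mult_left_mono)
    qed
    also have "\<dots> \<le> C * max 1 \<bar>x\<bar> ^ degree p"
      unfolding C_def sum_distrib_right[symmetric] by (intro mult_right_mono) auto
    finally show ?thesis .
  qed
  moreover have "C \<ge> 1" unfolding C_def by (simp add: sum_nonneg)
  ultimately show ?thesis by blast
qed

lemma poly_pos_min:
  fixes q :: "real poly"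
  assumes "\<And>x. \<bar>x\<bar> \<le> 1 \<Longrightarrow> poly q x \<noteq> 0"
  shows "\<exists>c>0. \<forall>x. \<bar>x\<bar> \<le> 1 \<longrightarrow> \<bar>poly q x\<bar> \<ge> c"
proof -
  have "compact {-1..1::real}" by simp
  moreover have "continuous_on {-1..1} (\<lambda>x. \<bar>poly q x\<bar>)"
    by (intro continuous_intros)
  ultimately obtain x0 where x0: "x0 \<in> {-1..1}" "\<And>y. y \<in> {-1..1} \<Longrightarrow> \<bar>poly q x0\<bar> \<le> \<bar>poly q y\<bar>"
    using continuous_attains_inf[of "{-1..1::real}" "\<lambda>x. \<bar>poly q x\<bar>"] by auto
  have "\<bar>poly q x0\<bar> > 0" using assms[of x0] x0(1) by (auto simp: abs_le_iff)
  moreover have "\<forall>x. \<bar>x\<bar> \<le> 1 \<longrightarrow> \<bar>poly q x\<bar> \<ge> \<bar>poly q x0\<bar>"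
    using x0(2) by (simp add: abs_le_iff)
  ultimately show ?thesis by blast
qed

lemma rpf_lower:
  assumes "rpf f" and pos: "\<And>x. x \<noteq> 0 \<Longrightarrow> f x > 0"
  shows "\<exists>c m. c > 0 \<and> (\<forall>x. 0 < \<bar>x\<bar> \<and> \<bar>x\<bar> \<le> 1 \<longrightarrow> f x \<ge> c * \<bar>x\<bar> ^ m)
     \<and> (\<forall>x. \<bar>x\<bar> \<ge> 1 \<longrightarrow> f x \<ge> c)"
proof -
  obtain p where p: "\<And>x. f x = poly p x" using assms(1) unfolding rpf_def by blast
  have p0: "p \<noteq> 0" using pos[of 1] p[of 1] by auto
  obtain q where q: "p = [:- 0, 1:] ^ order 0 p * q" and nd: "\<not> [:- 0, 1:] dvd q"
    using order_decomp[OF p0, of 0] by blast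
  have pq: "poly p x = x ^ order 0 p * poly q x" for x
    by (subst q) (simp add: poly_power)
  have q00: "poly q 0 \<noteq> 0" using nd by (simp add: poly_eq_0_iff_dvd)
  have qnz: "poly q x \<noteq> 0" if "\<bar>x\<bar> \<le> 1" for x
  proof (cases "x = 0")
    case True then show ?thesis using q00 by simp
  next
    case False then show ?thesis using pos[of x] p[of x] pq[of x] by auto
  qed
  obtain c1 where c1: "c1 > 0" "\<And>x. \<bar>x\<bar> \<le> 1 \<Longrightarrow> \<bar>poly q x\<bar> \<ge> c1"
    using poly_pos_min[OF qnz] by blast
  define r where "r = reflect_poly p"
  have rnz: "poly r t \<noteq> 0" if "\<bar>t\<bar> \<le> 1" for t
  proof (cases "t = 0")
    case True then show ?thesis using p0 by (simp add: r_def)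
  next
    case False
    then have "poly r t = t ^ degree p * poly p (inverse t)" by (simp add: r_def poly_reflect_poly_nz)
    moreover have "poly p (inverse t) \<noteq> 0" using pos[of "inverse t"] p[of "inverse t"] False by auto
    ultimately show ?thesis using False by simp
  qed
  obtain c2 where c2: "c2 > 0" "\<And>x. \<bar>x\<bar> \<le> 1 \<Longrightarrow> \<bar>poly r x\<bar> \<ge> c2"
    using poly_pos_min[OF rnz] by blast
  have A: "f x \<ge> min c1 c2 * \<bar>x\<bar> ^ order 0 p" if "0 < \<bar>x\<bar>" "\<bar>x\<bar> \<le> 1" for x
  proof -
    have "f x = \<bar>f x\<bar>" using pos[of x] that by auto
    also have "\<dots> = \<bar>x\<bar> ^ order 0 p * \<bar>poly q x\<bar>" by (simp add: p pq abs_mult power_abs)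
    also have "\<dots> \<ge> \<bar>x\<bar> ^ order 0 p * c1" using c1(2)[OF that(2)] by (simp add: mult_left_mono)
    finally show ?thesis by (smt (verit) mult.commute mult_right_mono zero_le_power abs_ge_zero)
  qed
  have B: "f x \<ge> min c1 c2" if "\<bar>x\<bar> \<ge> 1" for x
  proof -
    define t where "t = inverse x"
    have x0: "x \<noteq> 0" using that by auto
    have t1: "\<bar>t\<bar> \<le> 1" unfolding t_def using that by (simp add: abs_inverse inverse_le_1_iff)
    have "poly r t = t ^ degree p * poly p x" using x0 by (simp add: r_def t_def poly_reflect_poly_nz)
    then have "\<bar>poly r t\<bar> = \<bar>t\<bar> ^ degree p * \<bar>f x\<bar>" by (simp add: p abs_mult power_abs)
    also have "\<dots> \<le> \<bar>f x\<bar>" using t1 by (simp add: mult_left_le_one_le power_le_one)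
    finally have "c2 \<le> \<bar>f x\<bar>" using c2(2)[OF t1] by linarith
    then show ?thesis using pos[OF x0] by simp
  qed
  show ?thesis using A B c1 c2 by (intro exI[of _ "min c1 c2"] exI[of _ "order 0 p"]) auto
qed



lemma norm2_vec: "(norm (x::complex^'n))^2 = (\<Sum>i\<in>UNIV. (cmod (x$i))^2)"
  unfolding norm_vec_def L2_set_def by (simp add: sum_nonneg)

lemma det_bound:
  fixes M :: "complex^'n^'n" and E V :: real
  assumes E: "E \<ge> 0" and colk: "\<And>i. cmod (M$i$k) \<le> V"
    and oth: "\<And>i j. j \<noteq> k \<Longrightarrow> cmod (M$i$j) \<le> E"
  shows "cmod (det M) \<le> fact CARD('n) * (E^(CARD('n)-1) * V)"
proof -
  let ?P = "{p. p permutes (UNIV::'n set)}"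
  have V0: "V \<ge> 0" using colk[of undefined] norm_ge_zero order_trans by blast
  have trm: "cmod (of_int (sign p) * (\<Prod>i\<in>UNIV. M$i$p i)) \<le> E^(CARD('n)-1) * V"
    if p: "p \<in> ?P" for p
  proof -
    have sg: "cmod (of_int (sign p)) = 1" by (cases "evenperm p") (simp_all add: sign_def)
    have "surj p" using p permutes_surj by auto
    then obtain i0 where i0: "p i0 = k" by (metis surjD)
    have "cmod (of_int (sign p) * (\<Prod>i\<in>UNIV. M$i$p i)) = (\<Prod>i\<in>UNIV. cmod (M$i$p i))"
      by (simp only: norm_mult sg prod_norm[symmetric] mult_1)
    also have "\<dots> = cmod (M$i0$p i0) * (\<Prod>i\<in>UNIV-{i0}. cmod (M$i$p i))"
      by (simp add: prod.remove)
    also have "\<dots> \<le> V * E^(CARD('n)-1)"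
    proof (rule mult_mono)
      show "cmod (M$i0$p i0) \<le> V" using colk i0 by simp
      have "(\<Prod>i\<in>UNIV-{i0}. cmod (M$i$p i)) \<le> (\<Prod>i\<in>UNIV-{i0}. E)"
      proof (rule prod_mono)
        fix i assume "i \<in> UNIV - {i0}"
        then have "p i \<noteq> k" using i0 p by (metis DiffE insertI1 mem_Collect_eq permutes_inj injD)
        then show "0 \<le> cmod (M$i$p i) \<and> cmod (M$i$p i) \<le> E" using oth by auto
      qed
      also have "\<dots> = E^(CARD('n)-1)" by (simp add: card_Diff_singleton)
      finally show "(\<Prod>i\<in>UNIV-{i0}. cmod (M$i$p i)) \<le> E^(CARD('n)-1)" .
    qed (use V0 in \<open>auto intro: prod_nonneg\<close>)
    finally show ?thesis by (simp add: mult.commute)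
  qed
  have "cmod (det M) \<le> (\<Sum>p\<in>?P. cmod (of_int (sign p) * (\<Prod>i\<in>UNIV. M$i$p i)))"
    unfolding det_def by (rule norm_sum)
  also have "\<dots> \<le> (\<Sum>p\<in>?P. E^(CARD('n)-1) * V)" by (rule sum_mono) (use trm in auto)
  also have "\<dots> = fact CARD('n) * (E^(CARD('n)-1) * V)"
    by (simp add: card_permutations)
  finally show ?thesis .
qed

lemma cramer_bound:
  fixes N :: "complex^'n^'n" and E :: real
  assumes E: "E \<ge> 0" and ent: "\<And>i j. cmod (N$i$j) \<le> E"
  shows "(cmod (det N))^2 * (norm U)^2 \<le> CARD('n) * (fact CARD('n) * E^(CARD('n)-1))^2 * (norm (N *v U))^2"
proof -
  let ?b = "fact CARD('n) * E^(CARD('n)-1) * norm (N *v U)"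
  have "(cmod (det N))^2 * (norm U)^2 = (\<Sum>k\<in>UNIV. (cmod (U$k * det N))^2)"
    by (simp add: norm2_vec sum_distrib_left norm_mult power_mult_distrib mult.commute)
  also have "\<dots> = (\<Sum>k\<in>UNIV. (cmod (det ((\<chi> i j. if j = k then (N *v U)$i else N$i$j)::complex^'n^'n)))^2)"
    by (simp add: cramer_lemma)
  also have "\<dots> \<le> (\<Sum>k\<in>(UNIV::'n set). ?b^2)"
  proof (rule sum_mono)
    fix k
    have "cmod (det ((\<chi> i j. if j = k then (N *v U)$i else N$i$j)::complex^'n^'n)) \<le> ?b"
    proof -
      have "cmod (det ((\<chi> i j. if j = k then (N *v U)$i else N$i$j)::complex^'n^'n)) \<le> fact CARD('n) * (E^(CARD('n)-1) * norm (N *v U))"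
        by (rule det_bound[OF E]) (auto simp: ent Finite_Cartesian_Product.norm_nth_le)
      then show ?thesis by (simp add: mult.assoc)
    qed
    then show "(cmod (det ((\<chi> i j. if j = k then (N *v U)$i else N$i$j)::complex^'n^'n)))^2 \<le> ?b^2"
      by (simp add: power_mono)
  qed
  also have "\<dots> = CARD('n) * (fact CARD('n) * E^(CARD('n)-1))^2 * (norm (N *v U))^2"
    by (simp add: power_mult_distrib)
  finally show ?thesis .
qed



lemma pf_symb: "pf (\<lambda>x. symb A Ba x $ i $ j)"
  unfolding symb_def cmat_def
  by (simp add: pf_add pf_mult pf_const pf_ofreal)

lemma pf_matpow: "pf (\<lambda>x. matpow (symb A Ba x) k $ i $ j)"
proof (induction k arbitrary: i j)
  case 0 then show ?case by (simp add: mat_def pf_const)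
next
  case (Suc k) then show ?case
    by (simp add: matrix_matrix_mult_def pf_sum pf_mult pf_symb)
qed

lemma pf_B: "pf (\<lambda>x. (cmat Bs ** matpow (symb A Ba x) k) $ i $ j)"
  by (simp add: matrix_matrix_mult_def pf_sum pf_mult pf_matpow pf_const)

lemma pf_det: "(\<And>i j. pf (\<lambda>x. M x $ i $ j)) \<Longrightarrow> pf (\<lambda>x. det (M x))"
  unfolding det_def by (intro pf_sum pf_mult pf_prod pf_const) auto


lemma rank_det:
  fixes B :: "nat \<Rightarrow> complex^'n^'n"
  assumes "vec.dim {row j (B k) | j k. k \<le> K} = CARD('n)"
  shows "\<exists>\<sigma>::'n \<Rightarrow> 'n \<times> nat. (\<forall>i. snd (\<sigma> i) \<le> K) \<and>
     det (\<chi> i. row (fst (\<sigma> i)) (B (snd (\<sigma> i)))) \<noteq> 0"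
proof -
  define R where "R = {row j (B k) | j k. k \<le> K}"
  obtain Bb where Bb: "Bb \<subseteq> R" "vec.independent Bb" "R \<subseteq> vec.span Bb"
    using vec.maximal_independent_subset[of R] by blast
  have cardB: "card Bb = CARD('n)"
    using vec.basis_card_eq_dim[OF Bb(1) Bb(3) Bb(2)] assms R_def by simp
  have spR: "vec.span R = UNIV"
    proof -
    have "vec.dim R = vec.dimension TYPE(complex) TYPE('n)"
      using assms vec_dim_card[where 'a=complex and 'n='n] vec.dim_UNIV unfolding R_def by (simp add: vec.dimension_def)
    then show ?thesis using vec.dim_eq_full by blast
  qed
  have spB: "vec.span Bb = UNIV"
    using spR Bb(3) vec.span_minimal[OF Bb(3) vec.subspace_span] by auto
  have finB: "finite Bb" using cardB card_ge_0_finite[of Bb] finite_UNIV_card_ge_0[where 'a='n] by simp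
  obtain h where h: "bij_betw h (UNIV::'n set) Bb"
    using finite_same_card_bij[OF finite finB] cardB by auto
  define Nm :: "complex^'n^'n" where "Nm = (\<chi> i. h i)"
  have rN: "rows Nm = Bb" using h unfolding Nm_def rows_def row_def bij_betw_def
    by (auto simp: vec_lambda_eta)
  then have "\<exists>B'. B' ** Nm = mat 1" using matrix_left_invertible_span_rows_gen[of Nm] spB rN by simp
  then have dNm: "det Nm \<noteq> 0" using invertible_left_inverse invertible_det_nz by blast
  have "\<forall>i. \<exists>p. snd p \<le> K \<and> h i = row (fst p) (B (snd p))"
  proof
    fix i
    have "h i \<in> Bb" using h by (rule bij_betw_apply) simp
    then have "h i \<in> R" by (rule subsetD[OF Bb(1)])
    then obtain j k where "k \<le> K" "h i = row j (B k)" unfolding R_def by auto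
    then show "\<exists>p. snd p \<le> K \<and> h i = row (fst p) (B (snd p))" by (intro exI[of _ "(j,k)"]) simp
  qed
  then have "\<exists>\<sigma>. \<forall>i. snd (\<sigma> i) \<le> K \<and> h i = row (fst (\<sigma> i)) (B (snd (\<sigma> i)))"
    by (rule choice)
  then obtain \<sigma> where \<sigma>: "\<And>i. snd (\<sigma> i) \<le> K \<and> h i = row (fst (\<sigma> i)) (B (snd (\<sigma> i)))"
    by blast
  have eq: "(\<chi> i. row (fst (\<sigma> i)) (B (snd (\<sigma> i)))) = Nm"
    unfolding Nm_def by (rule arg_cong[where f=vec_lambda], rule ext) (simp add: \<sigma>)
  show ?thesis
  proof (intro exI conjI)
    show "\<forall>i. snd (\<sigma> i) \<le> K" using \<sigma> by blast
    show "det (\<chi> i. row (fst (\<sigma> i)) (B (snd (\<sigma> i)))) \<noteq> 0" using dNm eq by simp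
  qed
qed



theorem mainTheorem1:
  fixes A Ba Bs :: "real^'n^'n" and K :: nat
  assumes "CARD('n) \<ge> 2"
    and "transpose A = A"
    and "transpose Ba = - Ba"
    and "transpose Bs = Bs"
    and "K \<ge> 1"
    and "kalman_rank_condition Bs A Ba K"
  shows "\<exists>(\<alpha>::nat) (\<beta>::nat) (c::real). c > 0 \<and>
    (\<forall>U::complex^'n.
      (\<forall>\<xi>::real. \<bar>\<xi>\<bar> \<ge> 1 \<longrightarrow>
         (\<Sum>k\<le>K. \<bar>\<xi>\<bar> powi (- 2 * int k) * (norm (cmat Bs *v (matpow (symb A Ba \<xi>) k *v U)))\<^sup>2)
           \<ge> c * \<bar>\<xi>\<bar> powi (- 2 * int \<alpha>) * (norm U)\<^sup>2) \<and>
      (\<forall>\<xi>::real. 0 < \<bar>\<xi>\<bar> \<and> \<bar>\<xi>\<bar> \<le> 1 \<longrightarrow>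
         (\<Sum>k\<le>K. (norm (cmat Bs *v (matpow (symb A Ba \<xi>) k *v U)))\<^sup>2)
           \<ge> c * \<bar>\<xi>\<bar> ^ (2 * \<beta>) * (norm U)\<^sup>2))"
proof -
  define n where "n = CARD('n)"
  define B where "B = (\<lambda>k x. cmat Bs ** matpow (symb A Ba x) k)"
  define SS where "SS = {\<sigma>::'n \<Rightarrow> 'n \<times> nat. \<forall>i. snd (\<sigma> i) \<le> K}"
  define N where "N = (\<lambda>\<sigma> x. (\<chi> i. row (fst (\<sigma> i)) (B (snd (\<sigma> i)) x)) :: complex^'n^'n)"
  define D where "D = (\<lambda>x. \<Sum>\<sigma>\<in>SS. (cmod (det (N \<sigma> x)))^2)"
  define E2 where "E2 = (\<lambda>x. \<Sum>k\<le>K. \<Sum>i\<in>UNIV. \<Sum>j\<in>UNIV. (cmod (B k x $ i $ j))^2)"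
  define Q where "Q = (\<lambda>x U. \<Sum>k\<le>K. (norm (B k x *v U))^2)"
  have finSS: "finite SS"
  proof -
    have "SS = PiE UNIV (\<lambda>_. UNIV \<times> {..K})" unfolding SS_def PiE_UNIV_domain Pi_def by (auto simp: mem_Times_iff)
    then show ?thesis by (simp add: finite_PiE)
  qed
  have SSne: "(\<lambda>i. (i, 0)) \<in> SS" unfolding SS_def by simp
  then have cardSS: "card SS > 0" using finSS card_gt_0_iff by blast
  have n0: "n > 0" unfolding n_def by simp
  have rpfD: "rpf D"
    unfolding D_def by (intro rpf_sum pf_cmod2 pf_det) (simp add: N_def B_def row_def pf_B)
  have Dpos: "D x > 0" if "x \<noteq> 0" for x
  proof -
    have "stacked_rank Bs A Ba K x = CARD('n)" using assms(6) that unfolding kalman_rank_condition_def by blast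
    then obtain \<sigma> where s: "\<forall>i. snd (\<sigma> i) \<le> K" "det (N \<sigma> x) \<noteq> 0"
      using rank_det[of "\<lambda>k. B k x" K] unfolding stacked_rank_def N_def B_def by auto
    have sS: "\<sigma> \<in> SS" using s unfolding SS_def by simp
    have "0 < (cmod (det (N \<sigma> x)))^2" using s by simp
    also have "\<dots> \<le> D x" unfolding D_def using finSS sS by (intro member_le_sum) auto
    finally show ?thesis .
  qed
  obtain c0 m where c0: "c0 > 0" "\<And>x. 0 < \<bar>x\<bar> \<and> \<bar>x\<bar> \<le> 1 \<Longrightarrow> D x \<ge> c0 * \<bar>x\<bar> ^ m"
    "\<And>x. \<bar>x\<bar> \<ge> 1 \<Longrightarrow> D x \<ge> c0"
    using rpf_lower[OF rpfD Dpos] by blast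
  have rpfE: "rpf E2" unfolding E2_def by (intro rpf_sum pf_cmod2) (simp add: B_def pf_B)
  obtain C1 d where C1: "C1 \<ge> 1" "\<And>x. \<bar>E2 x\<bar> \<le> C1 * max 1 \<bar>x\<bar> ^ d"
    using rpf_upper[OF rpfE] by blast
  have E2nn: "E2 x \<ge> 0" for x unfolding E2_def by (intro sum_nonneg) auto
  have ent: "cmod (N \<sigma> x $ i $ j) \<le> sqrt (E2 x)" if "\<sigma> \<in> SS" for \<sigma> x i j
  proof -
    let ?k = "snd (\<sigma> i)" and ?r = "fst (\<sigma> i)"
    have k: "?k \<in> {..K}" using that unfolding SS_def by auto
    have "(cmod (N \<sigma> x $ i $ j))^2 = (cmod (B ?k x $ ?r $ j))^2" by (simp add: N_def row_def)
    also have "\<dots> \<le> (\<Sum>j\<in>UNIV. (cmod (B ?k x $ ?r $ j))^2)" by (rule member_le_sum) auto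
    also have "\<dots> \<le> (\<Sum>i\<in>UNIV. \<Sum>j\<in>UNIV. (cmod (B ?k x $ i $ j))^2)"
      by (rule member_le_sum[of _ _ "\<lambda>i. \<Sum>j\<in>UNIV. (cmod (B ?k x $ i $ j))^2"]) (auto intro: sum_nonneg)
    also have "\<dots> \<le> E2 x" unfolding E2_def by (rule member_le_sum[OF k]) (auto intro!: sum_nonneg)
    finally show ?thesis by (rule real_le_rsqrt)
  qed
  define G where "G = (\<lambda>x. real n * real n * real (card SS) * (fact n)^2 * E2 x ^ (n-1))"
  have key: "D x * (norm U)^2 \<le> G x * Q x U" for x U
  proof -
    have "D x * (norm U)^2 = (\<Sum>\<sigma>\<in>SS. (cmod (det (N \<sigma> x)))^2 * (norm U)^2)" by (simp add: D_def sum_distrib_right)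
    also have "\<dots> \<le> (\<Sum>\<sigma>\<in>SS. real n * (fact n)^2 * E2 x ^ (n-1) * (real n * Q x U))"
    proof (rule sum_mono)
      fix \<sigma> assume s: "\<sigma> \<in> SS"
      have c: "(cmod (det (N \<sigma> x)))^2 * (norm U)^2 \<le> real n * (fact n * sqrt (E2 x)^(n-1))^2 * (norm (N \<sigma> x *v U))^2"
        unfolding n_def by (rule cramer_bound) (use ent s E2nn in auto)
      have e: "(fact n * sqrt (E2 x)^(n-1))^2 = (fact n)^2 * E2 x^(n-1)"
      proof -
        have "(sqrt (E2 x)^(n-1))^2 = E2 x^(n-1)"
          by (metis power_mult mult.commute real_sqrt_pow2[OF E2nn])
        then show ?thesis by (simp add: power_mult_distrib)
      qed
      have q: "(norm (N \<sigma> x *v U))^2 \<le> real n * Q x U"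
      proof -
        have "(norm (N \<sigma> x *v U))^2 = (\<Sum>i\<in>UNIV. (cmod ((N \<sigma> x *v U)$i))^2)" by (rule norm2_vec)
        also have "\<dots> \<le> (\<Sum>i\<in>(UNIV::'n set). Q x U)"
        proof (rule sum_mono)
          fix i
          let ?k = "snd (\<sigma> i)" and ?r = "fst (\<sigma> i)"
          have k: "?k \<in> {..K}" using s unfolding SS_def by auto
          have "(N \<sigma> x *v U)$i = (B ?k x *v U) $ ?r" by (simp add: N_def row_def matrix_vector_mult_def)
          then have "(cmod ((N \<sigma> x *v U)$i))^2 \<le> (norm (B ?k x *v U))^2"
            by (simp add: power_mono Finite_Cartesian_Product.norm_nth_le)
          also have "\<dots> \<le> Q x U" unfolding Q_def by (rule member_le_sum[OF k]) auto
          finally show "(cmod ((N \<sigma> x *v U)$i))^2 \<le> Q x U" .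
        qed
        also have "\<dots> = real n * Q x U" by (simp add: n_def)
        finally show ?thesis .
      qed
      have "(cmod (det (N \<sigma> x)))^2 * (norm U)^2 \<le> real n * ((fact n)^2 * E2 x^(n-1)) * (real n * Q x U)"
        using c e q by (smt (verit) E2nn mult_left_mono zero_le_power zero_le_power2 of_nat_0_le_iff mult_nonneg_nonneg)
      then show "(cmod (det (N \<sigma> x)))^2 * (norm U)^2 \<le> real n * (fact n)^2 * E2 x ^ (n-1) * (real n * Q x U)"
        by (simp add: mult.assoc)
    qed
    also have "\<dots> = G x * Q x U" by (simp add: G_def)
    finally show ?thesis .
  qed
  define Gc where "Gc = real n * real n * real (card SS) * (fact n)^2 * C1^(n-1)"
  define e where "e = d * (n-1)"
  have Gc0: "Gc > 0" unfolding Gc_def using n0 cardSS C1(1) by simp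
  have Qnn: "Q x U \<ge> 0" for x U unfolding Q_def by (intro sum_nonneg) auto
  have key2: "D x * (norm U)^2 \<le> Gc * max 1 \<bar>x\<bar> ^ e * Q x U" for x U
  proof -
    have "E2 x ^ (n-1) \<le> (C1 * max 1 \<bar>x\<bar> ^ d)^(n-1)"
      using C1(2)[of x] E2nn[of x] by (intro power_mono) auto
    also have "\<dots> = C1^(n-1) * max 1 \<bar>x\<bar> ^ e" by (simp add: e_def power_mult_distrib power_mult)
    finally have "G x \<le> Gc * max 1 \<bar>x\<bar> ^ e" unfolding G_def Gc_def
      by (simp add: mult_left_mono mult.assoc)
    then have "G x * Q x U \<le> Gc * max 1 \<bar>x\<bar> ^ e * Q x U" using Qnn by (simp add: mult_right_mono)
    then show ?thesis using key[of x U] by linarith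
  qed
  define c where "c = c0 / Gc"
  have cpos: "c > 0" unfolding c_def using c0(1) Gc0 by simp
  have Qeq: "(\<Sum>k\<le>K. (norm (cmat Bs *v (matpow (symb A Ba x) k *v U)))\<^sup>2) = Q x U" for x U
    by (simp add: Q_def B_def matrix_vector_mul_assoc)
  have big: "c * \<bar>x\<bar> powi (- 2 * int (K + e)) * (norm U)^2 \<le>
        (\<Sum>k\<le>K. \<bar>x\<bar> powi (- 2 * int k) * (norm (cmat Bs *v (matpow (symb A Ba x) k *v U)))\<^sup>2)"
    if x: "1 \<le> \<bar>x\<bar>" for U :: "complex^'n" and x :: real
  proof -
    define t where "t = \<bar>x\<bar>"
    have t1: "t \<ge> 1" using x t_def by simp
    have pw: "t powi (- 2 * int k) = inverse (t ^ (2*k))" for k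
    proof -
      have "- 2 * int k = - int (2*k)" by simp
      then show ?thesis by (simp only: power_int_minus power_int_of_nat)
    qed
    have "c0 * (norm U)^2 \<le> D x * (norm U)^2"
      using c0(3)[OF x] by (simp add: mult_right_mono)
    also have "\<dots> \<le> Gc * t ^ e * Q x U" using key2[of x U] x by (simp add: t_def)
    finally have cQ: "c * (norm U)^2 \<le> t ^ e * Q x U"
      unfolding c_def using Gc0 by (simp add: field_simps)
    have "c * t powi (- 2 * int (K + e)) * (norm U)^2 = inverse (t^(2*(K+e))) * (c * (norm U)^2)"
      unfolding pw by (simp add: ac_simps)
    also have "\<dots> \<le> inverse (t^(2*(K+e))) * (t ^ e * Q x U)"
      using cQ t1 by (simp add: mult_left_mono)
    also have "\<dots> \<le> inverse (t^(2*K)) * Q x U"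
    proof -
      have "t^(2*K) * t^e \<le> t^(2*(K+e))"
        using t1 by (simp add: power_add[symmetric] power_increasing)
      then have "inverse (t^(2*(K+e))) * t ^ e \<le> inverse (t^(2*K))"
        using t1 by (simp add: field_simps)
      then show ?thesis using Qnn[of x U] by (simp add: mult.assoc[symmetric] mult_right_mono)
    qed
    also have "\<dots> = (\<Sum>k\<le>K. inverse (t^(2*K)) * (norm (B k x *v U))^2)"
      by (simp add: Q_def sum_distrib_left)
    also have "\<dots> \<le> (\<Sum>k\<le>K. t powi (- 2 * int k) * (norm (B k x *v U))^2)"
    proof (rule sum_mono)
      fix k assume "k \<in> {..K}"
      then have "t^(2*k) \<le> t^(2*K)" using t1 by (intro power_increasing) auto
      then have "inverse (t^(2*K)) \<le> inverse (t^(2*k))" using t1 by (simp add: le_imp_inverse_le)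
      then show "inverse (t^(2*K)) * (norm (B k x *v U))^2 \<le> t powi (- 2 * int k) * (norm (B k x *v U))^2"
        unfolding pw by (simp add: mult_right_mono)
    qed
    finally show "c * \<bar>x\<bar> powi (- 2 * int (K + e)) * (norm U)^2 \<le>
        (\<Sum>k\<le>K. \<bar>x\<bar> powi (- 2 * int k) * (norm (cmat Bs *v (matpow (symb A Ba x) k *v U)))\<^sup>2)"
      by (simp add: t_def B_def matrix_vector_mul_assoc)
  qed
  have small: "c * \<bar>x\<bar> ^ (2*m) * (norm U)^2 \<le> (\<Sum>k\<le>K. (norm (cmat Bs *v (matpow (symb A Ba x) k *v U)))\<^sup>2)"
    if x: "0 < \<bar>x\<bar> \<and> \<bar>x\<bar> \<le> 1" for U :: "complex^'n" and x :: real
  proof -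
    have "c0 * \<bar>x\<bar> ^ m * (norm U)^2 \<le> D x * (norm U)^2"
      using c0(2)[OF x] by (simp add: mult_right_mono)
    also have "\<dots> \<le> Gc * Q x U" using key2[of x U] x by simp
    finally have "c * \<bar>x\<bar> ^ m * (norm U)^2 \<le> Q x U"
      unfolding c_def using Gc0 by (simp add: field_simps)
    moreover have "\<bar>x\<bar> ^ (2*m) \<le> \<bar>x\<bar> ^ m" using x by (intro power_decreasing) auto
    ultimately have "c * \<bar>x\<bar> ^ (2*m) * (norm U)^2 \<le> Q x U"
      using cpos by (smt (verit) mult_right_mono mult_left_mono zero_le_power2)
    then show "c * \<bar>x\<bar> ^ (2*m) * (norm U)^2 \<le> (\<Sum>k\<le>K. (norm (cmat Bs *v (matpow (symb A Ba x) k *v U)))\<^sup>2)"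
      by (simp add: Qeq)
  qed
  show ?thesis
    apply (rule exI[of _ "K + e"], rule exI[of _ m], rule exI[of _ c])
    using cpos big small by auto
qed

end
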